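(* Let $(\Omega,\Sigma,\mathbb{P})$ be a probability space, let $0<\beta\leqslant1$, and let $\mathcal{A},\mathcal{B}$ be sub-$\sigma$-algebras of $\Sigma$ which are $\beta$-mixing. Let $1\leqslant r<p\leqslant\infty$ and let $X\in L_p$. Then \[ \big\|\mathbb{E}\big[\mathbb{E}[X\,|\,\mathcal{A}]\,|\,\mathcal{B}\big]-\mathbb{E}[X]\big\|_{L_r}\leqslant10\,\beta^{\frac1r-\frac1p}\,\|X-\mathbb{E}[X]\|_{L_p}. \]
   Context: Two sub-$\sigma$-algebras $\mathcal{A},\mathcal{B}$ of $\Sigma$ are $\beta$-mixing if $|\mathbb{P}(A\cap B)-\mathbb{P}(A)\mathbb{P}(B)|\leqslant\beta$ for every $A\in\mathcal{A}$ and $B\in\mathcal{B}$. *)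

theory Defs
  imports "HOL-Probability.Probability"
begin

definition beta_mixing :: "'a measure \<Rightarrow> 'a measure \<Rightarrow> 'a measure \<Rightarrow> real \<Rightarrow> bool" where
  "beta_mixing M A B \<beta> \<longleftrightarrow>
     (\<forall>a\<in>sets A. \<forall>b\<in>sets B. \<bar>measure M (a \<inter> b) - measure M a * measure M b\<bar> \<le> \<beta>)"

definition lp_norm :: "'a measure \<Rightarrow> ennreal \<Rightarrow> ('a \<Rightarrow> real) \<Rightarrow> ennreal" where
  "lp_norm M p f =
     (if p = \<infinity> then esssup M (\<lambda>x. ennreal \<bar>f x\<bar>)
      else (let I = (\<integral>\<^sup>+ x. ennreal (\<bar>f x\<bar> powr enn2real p) \<partial>M) in
            if I = \<infinity> then \<infinity> else ennreal (enn2real I powr (1 / enn2real p))))"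

definition recip_exp :: "ennreal \<Rightarrow> real" where
  "recip_exp p = (if p = \<infinity> then 0 else 1 / enn2real p)"

end

theory Submission
  imports Defs
begin

lemma sfs: "prob_space M \<Longrightarrow> subalgebra M F \<Longrightarrow> sigma_finite_subalgebra M F"
  by (rule finite_measure_subalgebra_is_sigma_finite)
     (simp add: finite_measure_subalgebra_def finite_measure_subalgebra_axioms_def prob_space_def)

lemma convex_nonneg_powr:
  assumes r: "1 \<le> (r::real)"
  shows "convex_on {0..} (\<lambda>x::real. x powr r)"
proof (rule convex_onI)
  fix t x y :: real
  assume t: "0 < t" "t < 1" and x: "x \<in> {0..}" and y: "y \<in> {0..}"
  show "((1 - t) *\<^sub>R x + t *\<^sub>R y) powr r \<le> (1 - t) * x powr r + t * y powr r"
  proof (cases "x = 0 \<or> y = 0")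
    case True
    have a: "s powr r \<le> s" if "0 \<le> s" "s \<le> 1" for s :: real
      using that r by (metis powr_le1 powr_mono' powr_one order.refl zero_le_one powr_one_gt_zero_iff)
    show ?thesis
    proof (cases "x = 0")
      case True
      have "(t * y) powr r = t powr r * y powr r" using t y by (simp add: powr_mult)
      also have "\<dots> \<le> t * y powr r" using a[of t] t by (intro mult_right_mono) auto
      finally show ?thesis using True by simp
    next
      case False
      with \<open>x = 0 \<or> y = 0\<close> have "y = 0" by simp
      have "((1-t) * x) powr r = (1-t) powr r * x powr r" using t x by (simp add: powr_mult)
      also have "\<dots> \<le> (1-t) * x powr r" using a[of "1-t"] t by (intro mult_right_mono) auto
      finally show ?thesis using \<open>y = 0\<close> by simp
    qed
  next
    case False
    then have "x \<in> {0<..}" "y \<in> {0<..}" using x y by auto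
    from convex_onD[OF powr_convex[OF r] _ _ this, of t] t show ?thesis by simp
  qed
qed simp

lemma convex_abs_powr:
  assumes r: "1 \<le> (r::real)"
  shows "convex_on UNIV (\<lambda>x::real. \<bar>x\<bar> powr r)"
proof (rule convex_onI)
  fix t x y :: real
  assume t: "0 < t" "t < 1"
  have "\<bar>(1 - t) *\<^sub>R x + t *\<^sub>R y\<bar> powr r \<le> ((1 - t) *\<^sub>R \<bar>x\<bar> + t *\<^sub>R \<bar>y\<bar>) powr r"
    using t r by (intro powr_mono2) (auto intro!: order.trans[OF abs_triangle_ineq] simp: abs_mult)
  also have "\<dots> \<le> (1 - t) * \<bar>x\<bar> powr r + t * \<bar>y\<bar> powr r"
    using convex_onD[OF convex_nonneg_powr[OF r], of t "\<bar>x\<bar>" "\<bar>y\<bar>"] t by simp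
  finally show "\<bar>(1 - t) *\<^sub>R x + t *\<^sub>R y\<bar> powr r \<le> (1 - t) * \<bar>x\<bar> powr r + t * \<bar>y\<bar> powr r" .
qed simp

lemma abs_add_powr_le:
  assumes r: "1 \<le> (r::real)"
  shows "\<bar>a + b\<bar> powr r \<le> 2 powr (r - 1) * (\<bar>a\<bar> powr r + \<bar>b\<bar> powr r)"
proof -
  have "\<bar>(1 - 1/2) *\<^sub>R (2*a) + (1/2) *\<^sub>R (2*b)\<bar> powr r \<le> (1 - 1/2) * \<bar>2*a\<bar> powr r + (1/2) * \<bar>2*b\<bar> powr r"
    by (rule convex_onD[OF convex_abs_powr[OF r]]) auto
  also have "\<dots> = 2 powr r / 2 * (\<bar>a\<bar> powr r + \<bar>b\<bar> powr r)"
    by (simp add: abs_mult powr_mult algebra_simps)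
  also have "2 powr r / 2 = 2 powr (r - 1)" by (simp add: powr_diff)
  finally show ?thesis by simp
qed


lemma intb:
  fixes f :: "'a \<Rightarrow> real"
  assumes "prob_space M" "f \<in> borel_measurable M" "\<And>x. x \<in> space M \<Longrightarrow> \<bar>f x\<bar> \<le> B"
  shows "integrable M f"
  using finite_measure.integrable_const_bound[of M f B] assms
  by (simp add: prob_space_def AE_I2)

lemma bprod: "\<bar>a\<bar> \<le> l \<Longrightarrow> \<bar>b\<bar> \<le> 1 \<Longrightarrow> \<bar>a * b\<bar> \<le> (l::real)"
proof -
  assume a: "\<bar>a\<bar> \<le> l" and b: "\<bar>b\<bar> \<le> 1"
  have "\<bar>a\<bar> * \<bar>b\<bar> \<le> l * 1" using a b by (intro mult_mono) auto
  then show ?thesis by (simp add: abs_mult)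
qed

lemma simple_cov:
  assumes P: "prob_space M" and sA: "subalgebra M A" and sB: "subalgebra M B"
    and mix: "beta_mixing M A B \<beta>"
    and a: "a1 \<in> sets A" "a2 \<in> sets A" and b: "b1 \<in> sets B" "b2 \<in> sets B"
  shows "(\<integral>x. (indicator b1 x - indicator b2 x) * (indicator a1 x - indicator a2 x) \<partial>M)
     - (\<integral>x. indicator b1 x - indicator b2 x \<partial>M) * (\<integral>x. indicator a1 x - indicator a2 x \<partial>M) \<le> 4 * \<beta>"
proof -
  interpret prob_space M by fact
  have aM: "a1 \<in> sets M" "a2 \<in> sets M" using a sA by (auto simp: subalgebra_def)
  have bM: "b1 \<in> sets M" "b2 \<in> sets M" using b sB by (auto simp: subalgebra_def)
  have m: "\<bar>measure M (b \<inter> a) - measure M b * measure M a\<bar> \<le> \<beta>" if "a \<in> sets A" "b \<in> sets B" for a b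
    using mix that unfolding beta_mixing_def by (metis Int_commute mult.commute)
  have eq: "(\<lambda>x. (indicator b1 x - indicator b2 x) * (indicator a1 x - indicator a2 x) :: real)
     = (\<lambda>x. indicator (b1 \<inter> a1) x - indicator (b1 \<inter> a2) x - indicator (b2 \<inter> a1) x + indicator (b2 \<inter> a2) x)"
    by (auto simp: indicator_def fun_eq_iff)
  have I: "integrable M (indicator S :: _ \<Rightarrow> real)" if "S \<in> sets M" for S
    using that by (intro integrable_real_indicator) (auto simp: less_top[symmetric])
  have h1: "(\<integral>x. (indicator b1 x - indicator b2 x) * (indicator a1 x - indicator a2 x) \<partial>M)
    = measure M (b1 \<inter> a1) - measure M (b1 \<inter> a2) - measure M (b2 \<inter> a1) + measure M (b2 \<inter> a2)"
    unfolding eq using aM bM by (simp add: I)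
  have h2: "(\<integral>x. indicator b1 x - indicator b2 x \<partial>M) = measure M b1 - measure M b2"
    using bM by (simp add: I)
  have h3: "(\<integral>x. indicator a1 x - indicator a2 x \<partial>M) = measure M a1 - measure M a2"
    using aM by (simp add: I)
  show ?thesis
    unfolding h1 h2 h3
    using m[OF a(1) b(1)] m[OF a(2) b(1)] m[OF a(1) b(2)] m[OF a(2) b(2)]
    by (simp add: algebra_simps abs_le_iff)
qed


lemma gen_cov:
  fixes U S :: "'a \<Rightarrow> real"
  assumes P: "prob_space M" and sF: "subalgebra M F"
    and U: "U \<in> borel_measurable F" "\<And>x. x \<in> space M \<Longrightarrow> \<bar>U x\<bar> \<le> l"
    and S: "S \<in> borel_measurable M" "\<And>x. x \<in> space M \<Longrightarrow> \<bar>S x\<bar> \<le> 1"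
    and K: "\<And>a1 a2. a1 \<in> sets F \<Longrightarrow> a2 \<in> sets F \<Longrightarrow>
      (\<integral>x. (indicator a1 x - indicator a2 x) * S x \<partial>M)
      - (\<integral>x. indicator a1 x - indicator a2 x \<partial>M) * (\<integral>x. S x \<partial>M) \<le> K"
    and l: "0 \<le> l"
  shows "(\<integral>x. U x * S x \<partial>M) - (\<integral>x. U x \<partial>M) * (\<integral>x. S x \<partial>M) \<le> l * K"
proof -
  interpret prob_space M by fact
  interpret sigma_finite_subalgebra M F using sfs[OF P sF] .
  have UM[measurable]: "U \<in> borel_measurable M" using measurable_from_subalg[OF sF U(1)] .
  note [measurable] = S(1) U(1)
  have intS: "integrable M S"
    by (rule intb[OF P, where B=1]) (use S in auto)
  have intU: "integrable M U"
    by (rule intb[OF P, where B=l]) (use U in auto)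
  have intUS: "integrable M (\<lambda>x. U x * S x)"
    by (rule intb[OF P, where B=l])
       (use U S l in \<open>auto intro: bprod\<close>)
  define G where "G = real_cond_exp M F S"
  have GF[measurable]: "G \<in> borel_measurable F" unfolding G_def by simp
  have GM[measurable]: "G \<in> borel_measurable M" unfolding G_def by simp
  have intG: "integrable M G" and intGeq: "(\<integral>x. G x \<partial>M) = (\<integral>x. S x \<partial>M)"
    using real_cond_exp_int[OF intS] unfolding G_def by auto
  have intUG: "integrable M (\<lambda>x. U x * G x)" and UGeq: "(\<integral>x. U x * G x \<partial>M) = (\<integral>x. U x * S x \<partial>M)"
    using real_cond_exp_intg[OF intUS U(1) S(1)] unfolding G_def by auto
  define m where "m = (\<integral>x. S x \<partial>M)"
  have "(\<integral>x. U x * S x \<partial>M) - (\<integral>x. U x \<partial>M) * m = (\<integral>x. U x * (G x - m) \<partial>M)"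
  proof -
    have "(\<integral>x. U x * (G x - m) \<partial>M) = (\<integral>x. U x * G x - U x * m \<partial>M)"
      by (simp add: right_diff_distrib)
    also have "\<dots> = (\<integral>x. U x * G x \<partial>M) - (\<integral>x. U x * m \<partial>M)"
      by (rule Bochner_Integration.integral_diff) (auto simp: intUG intU)
    finally show ?thesis using UGeq by simp
  qed
  also have "\<dots> \<le> (\<integral>x. l * \<bar>G x - m\<bar> \<partial>M)"
  proof (rule integral_mono)
    show "integrable M (\<lambda>x. U x * (G x - m))"
      using intUG intU by (simp add: right_diff_distrib)
    show "integrable M (\<lambda>x. l * \<bar>G x - m\<bar>)"
      using intG by auto
    fix x assume x: "x \<in> space M"
    have "U x * (G x - m) \<le> \<bar>U x\<bar> * \<bar>G x - m\<bar>" by (metis abs_ge_self abs_mult)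
    also have "\<dots> \<le> l * \<bar>G x - m\<bar>" using U(2)[OF x] by (intro mult_right_mono) auto
    finally show "U x * (G x - m) \<le> l * \<bar>G x - m\<bar>" .
  qed
  also have "(\<integral>x. l * \<bar>G x - m\<bar> \<partial>M) \<le> l * K"
  proof -
    define a1 where "a1 = {x \<in> space F. m < G x}"
    define a2 where "a2 = {x \<in> space F. G x < m}"
    have a[measurable]: "a1 \<in> sets F" "a2 \<in> sets F" unfolding a1_def a2_def by measurable
    have sp: "space F = space M" using sF by (simp add: subalgebra_def)
    define xi where "xi = (\<lambda>x. indicator a1 x - indicator a2 x :: real)"
    have xiF[measurable]: "xi \<in> borel_measurable F" unfolding xi_def by measurable
    have xiM[measurable]: "xi \<in> borel_measurable M" using measurable_from_subalg[OF sF xiF] .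
    have xib: "\<bar>xi x\<bar> \<le> 1" for x unfolding xi_def by (auto simp: indicator_def)
    have abseq: "\<bar>G x - m\<bar> = xi x * (G x - m)" if "x \<in> space M" for x
      using that sp unfolding xi_def a1_def a2_def by (auto simp: indicator_def)
    have intxiS: "integrable M (\<lambda>x. xi x * S x)"
      by (rule intb[OF P, where B=1])
         (use xib S in \<open>auto intro: bprod\<close>)
    have intxi: "integrable M xi"
      by (rule intb[OF P, where B=1]) (use xib in auto)
    have intxiG: "integrable M (\<lambda>x. xi x * G x)" and xiGeq: "(\<integral>x. xi x * G x \<partial>M) = (\<integral>x. xi x * S x \<partial>M)"
      using real_cond_exp_intg[OF intxiS xiF S(1)] unfolding G_def by auto
    have "(\<integral>x. l * \<bar>G x - m\<bar> \<partial>M) = (\<integral>x. l * (xi x * (G x - m)) \<partial>M)"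
      using abseq by (intro Bochner_Integration.integral_cong) auto
    also have "\<dots> = l * (\<integral>x. xi x * G x - xi x * m \<partial>M)"
      by (simp only: integral_mult_right_zero) (simp add: right_diff_distrib)
    also have "(\<integral>x. xi x * G x - xi x * m \<partial>M) = (\<integral>x. xi x * S x \<partial>M) - (\<integral>x. xi x \<partial>M) * m"
      by (subst Bochner_Integration.integral_diff) (auto simp: intxiG intxi xiGeq)
    also have "\<dots> \<le> K" using K[OF a] unfolding xi_def m_def by simp
    finally show ?thesis using l by (simp add: mult_left_mono)
  qed
  finally show ?thesis unfolding m_def .
qed


lemma full_cov:
  fixes U S :: "'a \<Rightarrow> real"
  assumes P: "prob_space M" and sA: "subalgebra M A" and sB: "subalgebra M B"
    and mix: "beta_mixing M A B \<beta>"
    and U: "U \<in> borel_measurable A" "\<And>x. x \<in> space M \<Longrightarrow> \<bar>U x\<bar> \<le> l"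
    and S: "S \<in> borel_measurable B" "\<And>x. x \<in> space M \<Longrightarrow> \<bar>S x\<bar> \<le> 1"
    and l: "0 \<le> l"
  shows "(\<integral>x. U x * S x \<partial>M) - (\<integral>x. U x \<partial>M) * (\<integral>x. S x \<partial>M) \<le> l * (4 * \<beta>)"
proof (rule gen_cov[OF P sA U _ _ _ l])
  show SM: "S \<in> borel_measurable M" using measurable_from_subalg[OF sB S(1)] .
  show "\<bar>S x\<bar> \<le> 1" if "x \<in> space M" for x using S(2) that .
  fix a1 a2 assume a: "a1 \<in> sets A" "a2 \<in> sets A"
  have aM: "a1 \<in> sets M" "a2 \<in> sets M" using a sA by (auto simp: subalgebra_def)
  have "(\<integral>x. S x * (indicator a1 x - indicator a2 x) \<partial>M)
      - (\<integral>x. S x \<partial>M) * (\<integral>x. indicator a1 x - indicator a2 x \<partial>M) \<le> 1 * (4 * \<beta>)"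
  proof (rule gen_cov[OF P sB S])
    show "(\<lambda>x. indicator a1 x - indicator a2 x :: real) \<in> borel_measurable M" using aM by measurable
    show "\<bar>indicator a1 x - indicator a2 x :: real\<bar> \<le> 1" for x by (auto simp: indicator_def)
    show "(\<integral>x. (indicator b1 x - indicator b2 x) * (indicator a1 x - indicator a2 x) \<partial>M)
     - (\<integral>x. indicator b1 x - indicator b2 x \<partial>M) * (\<integral>x. indicator a1 x - indicator a2 x \<partial>M) \<le> 4 * \<beta>"
      if "b1 \<in> sets B" "b2 \<in> sets B" for b1 b2
      by (rule simple_cov[OF P sA sB mix a that])
  qed auto
  then show "(\<integral>x. (indicator a1 x - indicator a2 x) * S x \<partial>M)
      - (\<integral>x. indicator a1 x - indicator a2 x \<partial>M) * (\<integral>x. S x \<partial>M) \<le> 4 * \<beta>"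
    by (simp add: mult.commute)
qed


lemma intbAE:
  fixes f :: "'a \<Rightarrow> real"
  assumes "prob_space M" "f \<in> borel_measurable M" "AE x in M. \<bar>f x\<bar> \<le> B"
  shows "integrable M f"
  using finite_measure.integrable_const_bound[of M f B] assms
  by (simp add: prob_space_def)

lemma powr_split_le:
  assumes r: "1 \<le> (r::real)" and v: "\<bar>v\<bar> \<le> c"
  shows "\<bar>v\<bar> powr r \<le> c powr (r - 1) * \<bar>v\<bar>"
proof (cases "v = 0")
  case True then show ?thesis by simp
next
  case False
  have "\<bar>v\<bar> powr r = \<bar>v\<bar> powr (r - 1) * \<bar>v\<bar> powr 1" by (subst powr_add[symmetric]) simp
  also have "\<dots> \<le> c powr (r - 1) * \<bar>v\<bar>"
    using r v by (auto intro!: mult_right_mono powr_mono2)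
  finally show ?thesis .
qed

lemma bounded_case:
  fixes U :: "'a \<Rightarrow> real"
  assumes P: "prob_space M" and sA: "subalgebra M A" and sB: "subalgebra M B"
    and mix: "beta_mixing M A B \<beta>" and r: "1 \<le> r"
    and U: "U \<in> borel_measurable A" "\<And>x. x \<in> space M \<Longrightarrow> \<bar>U x\<bar> \<le> l"
    and l: "0 < l"
  shows "integrable M (\<lambda>x. \<bar>real_cond_exp M B U x - (\<integral>y. U y \<partial>M)\<bar> powr r)"
    and "(\<integral>x. \<bar>real_cond_exp M B U x - (\<integral>y. U y \<partial>M)\<bar> powr r \<partial>M) \<le> 2 powr (r + 1) * l powr r * \<beta>"
proof -
  interpret prob_space M by fact
  interpret B: sigma_finite_subalgebra M B using sfs[OF P sB] .
  have UM[measurable]: "U \<in> borel_measurable M" using measurable_from_subalg[OF sA U(1)] .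
  have intU: "integrable M U" by (rule intb[OF P UM U(2)])
  define c where "c = (\<integral>y. U y \<partial>M)"
  define V where "V = (\<lambda>x. real_cond_exp M B U x - c)"
  have VB[measurable]: "V \<in> borel_measurable B" unfolding V_def by measurable
  have VM[measurable]: "V \<in> borel_measurable M" unfolding V_def by measurable
  have Uae: "AE x in M. U x \<le> l" "AE x in M. -l \<le> U x" using U(2) by (auto intro!: AE_I2 simp: abs_le_iff) (metis minus_le_iff)
  then have c: "\<bar>c\<bar> \<le> l"
    using integral_le_const[OF intU, of l] integral_ge_const[OF intU, of "-l"]
    unfolding c_def by (auto simp: abs_le_iff)
  have "AE x in M. real_cond_exp M B U x \<le> l"
    by (rule B.real_cond_exp_le_c[OF intU Uae(1)])
  moreover have "AE x in M. real_cond_exp M B U x \<ge> -l"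
    by (rule B.real_cond_exp_ge_c[OF intU Uae(2)])
  ultimately have Vb: "AE x in M. \<bar>V x\<bar> \<le> 2 * l"
    using c unfolding V_def by (auto simp: abs_le_iff)
  have intVr: "integrable M (\<lambda>x. \<bar>V x\<bar> powr r)"
    by (rule intbAE[OF P, where B="(2*l) powr r"]) (use Vb l r in \<open>auto intro!: powr_mono2 elim!: eventually_mono\<close>)
  then show "integrable M (\<lambda>x. \<bar>real_cond_exp M B U x - (\<integral>y. U y \<partial>M)\<bar> powr r)"
    unfolding V_def c_def .
  have intV: "integrable M V" by (rule intbAE[OF P VM Vb])
  have "(\<integral>x. \<bar>V x\<bar> powr r \<partial>M) \<le> (\<integral>x. (2*l) powr (r - 1) * \<bar>V x\<bar> \<partial>M)"
    by (rule integral_mono_AE[OF intVr]) (use intV Vb in \<open>auto intro: powr_split_le[OF r] elim!: eventually_mono\<close>)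
  also have "\<dots> = (2*l) powr (r - 1) * (\<integral>x. \<bar>V x\<bar> \<partial>M)" by simp
  also have "(\<integral>x. \<bar>V x\<bar> \<partial>M) \<le> l * (4 * \<beta>)"
  proof -
    define b1 where "b1 = {x \<in> space B. 0 < V x}"
    define b2 where "b2 = {x \<in> space B. V x < 0}"
    have b[measurable]: "b1 \<in> sets B" "b2 \<in> sets B" unfolding b1_def b2_def by measurable
    have sp: "space B = space M" using sB by (simp add: subalgebra_def)
    define S where "S = (\<lambda>x. indicator b1 x - indicator b2 x :: real)"
    have SB[measurable]: "S \<in> borel_measurable B" unfolding S_def by measurable
    have SM[measurable]: "S \<in> borel_measurable M" using measurable_from_subalg[OF sB SB] .
    have Sb: "\<bar>S x\<bar> \<le> 1" for x unfolding S_def by (auto simp: indicator_def)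
    have abseq: "\<bar>V x\<bar> = S x * real_cond_exp M B U x - S x * c" if "x \<in> space M" for x
      using that sp unfolding S_def b1_def b2_def V_def by (auto simp: indicator_def)
    have intSU: "integrable M (\<lambda>x. S x * U x)"
      by (rule intb[OF P, where B=l]) (use Sb U(2) in \<open>auto intro: bprod[of "U _" l "S _", simplified mult.commute]\<close>)
    have intS: "integrable M S" by (rule intb[OF P SM, where B=1]) (use Sb in auto)
    have intSC: "integrable M (\<lambda>x. S x * real_cond_exp M B U x)"
      and SCeq: "(\<integral>x. S x * real_cond_exp M B U x \<partial>M) = (\<integral>x. S x * U x \<partial>M)"
      using B.real_cond_exp_intg[OF intSU SB UM] by auto
    have "(\<integral>x. \<bar>V x\<bar> \<partial>M) = (\<integral>x. S x * real_cond_exp M B U x - S x * c \<partial>M)"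
      using abseq by (intro Bochner_Integration.integral_cong) auto
    also have "\<dots> = (\<integral>x. S x * U x \<partial>M) - (\<integral>x. S x \<partial>M) * c"
      by (subst Bochner_Integration.integral_diff) (auto simp: intSC intS SCeq)
    also have "\<dots> = (\<integral>x. U x * S x \<partial>M) - (\<integral>x. U x \<partial>M) * (\<integral>x. S x \<partial>M)"
      unfolding c_def by (simp add: mult.commute)
    also have "\<dots> \<le> l * (4 * \<beta>)"
      by (rule full_cov[OF P sA sB mix U SB _ ]) (use Sb l in auto)
    finally show ?thesis .
  qed
  then have "(2*l) powr (r - 1) * (\<integral>x. \<bar>V x\<bar> \<partial>M) \<le> (2*l) powr (r - 1) * (l * (4 * \<beta>))"
    by (intro mult_left_mono) auto
  also have "\<dots> = 2 powr (r + 1) * l powr r * \<beta>"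
  proof -
    have "(2::real) powr (r + 1) = 2 powr (r - 1) * 2 powr 2" by (subst powr_add[symmetric]) (simp add: add.commute)
    moreover have "l powr r = l powr (r - 1) * l powr 1" by (subst powr_add[symmetric]) simp
    ultimately show ?thesis using l by (simp add: powr_mult)
  qed
  finally show "(\<integral>x. \<bar>real_cond_exp M B U x - (\<integral>y. U y \<partial>M)\<bar> powr r \<partial>M) \<le> 2 powr (r + 1) * l powr r * \<beta>"
    unfolding V_def c_def .
qed


lemma tail_case:
  fixes Z2 :: "'a \<Rightarrow> real"
  assumes P: "prob_space M" and sF: "subalgebra M F" and r: "1 \<le> r"
    and Z2M[measurable]: "Z2 \<in> borel_measurable M" and intZ2: "integrable M Z2"
    and intZ2r: "integrable M (\<lambda>x. \<bar>Z2 x\<bar> powr r)"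
  shows "integrable M (\<lambda>x. \<bar>real_cond_exp M F Z2 x - (\<integral>y. Z2 y \<partial>M)\<bar> powr r)"
    and "(\<integral>x. \<bar>real_cond_exp M F Z2 x - (\<integral>y. Z2 y \<partial>M)\<bar> powr r \<partial>M) \<le> 2 powr r * (\<integral>x. \<bar>Z2 x\<bar> powr r \<partial>M)"
proof -
  interpret prob_space M by fact
  interpret F: sigma_finite_subalgebra M F using sfs[OF P sF] .
  define e where "e = (\<integral>y. Z2 y \<partial>M)"
  define D where "D = (\<lambda>x. Z2 x - e)"
  define q where "q = (\<lambda>t::real. \<bar>t\<bar> powr r)"
  have qc: "convex_on UNIV q" unfolding q_def by (rule convex_abs_powr[OF r])
  have qm[measurable]: "q \<in> borel_measurable borel" unfolding q_def by measurable
  have DM[measurable]: "D \<in> borel_measurable M" unfolding D_def by measurable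
  have intD: "integrable M D" unfolding D_def using intZ2 by simp
  have intbnd: "integrable M (\<lambda>x. 2 powr (r - 1) * (\<bar>Z2 x\<bar> powr r + \<bar>-e\<bar> powr r))"
    using intZ2r by simp
  have intqD: "integrable M (\<lambda>x. q (D x))"
  proof (rule Bochner_Integration.integrable_bound[OF intbnd])
    show "(\<lambda>x. q (D x)) \<in> borel_measurable M" by measurable
    show "AE x in M. norm (q (D x)) \<le> norm (2 powr (r - 1) * (\<bar>Z2 x\<bar> powr r + \<bar>-e\<bar> powr r))"
      unfolding q_def D_def using abs_add_powr_le[OF r, of "Z2 _" "-e"] by auto
  qed
  have UNIVI: "(UNIV::real set) = {0<..<1} \<or> UNIV = {0<..} \<or> UNIV = {..<1} \<or> UNIV = (UNIV :: real set)"
    by simp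
  have J: "AE x in M. q (real_cond_exp M F D x) \<le> real_cond_exp M F (\<lambda>x. q (D x)) x"
    using F.real_cond_exp_jensens_inequality(2)[OF intD _ UNIVI intqD qc qm] by simp
  have intqC: "integrable M (\<lambda>x. q (real_cond_exp M F D x))"
    using F.integrable_convex_cond_exp[OF intD _ UNIVI intqD qc qm] by simp
  have Ceq: "AE x in M. real_cond_exp M F D x = real_cond_exp M F Z2 x - e"
  proof -
    have "AE x in M. real_cond_exp M F D x = real_cond_exp M F Z2 x - real_cond_exp M F (\<lambda>x. e) x"
      unfolding D_def by (rule F.real_cond_exp_diff[OF intZ2]) simp
    moreover have "AE x in M. real_cond_exp M F (\<lambda>x. e) x = e"
      by (rule F.real_cond_exp_F_meas[of "\<lambda>x. e"]) auto
    ultimately show ?thesis by eventually_elim auto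
  qed
  have AEq: "AE x in M. \<bar>real_cond_exp M F Z2 x - e\<bar> powr r = q (real_cond_exp M F D x)"
    using Ceq unfolding q_def by auto
  show "integrable M (\<lambda>x. \<bar>real_cond_exp M F Z2 x - (\<integral>y. Z2 y \<partial>M)\<bar> powr r)"
    unfolding e_def[symmetric]
    by (rule integrable_cong_AE_imp[OF intqC]) (use AEq in \<open>auto elim: eventually_mono\<close>)
  have "(\<integral>x. \<bar>real_cond_exp M F Z2 x - e\<bar> powr r \<partial>M) = (\<integral>x. q (real_cond_exp M F D x) \<partial>M)"
    by (rule integral_cong_AE[OF _ _ AEq]) auto
  also have "\<dots> \<le> (\<integral>x. real_cond_exp M F (\<lambda>x. q (D x)) x \<partial>M)"
    by (rule integral_mono_AE[OF intqC _ J]) (rule F.real_cond_exp_int(1)[OF intqD])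
  also have "\<dots> = (\<integral>x. q (D x) \<partial>M)" by (rule F.real_cond_exp_int(2)[OF intqD])
  also have "\<dots> \<le> (\<integral>x. 2 powr (r - 1) * (\<bar>Z2 x\<bar> powr r + \<bar>-e\<bar> powr r) \<partial>M)"
    by (rule integral_mono[OF intqD intbnd]) (unfold q_def D_def, use abs_add_powr_le[OF r, of "Z2 _" "-e"] in auto)
  also have "\<dots> = 2 powr (r - 1) * ((\<integral>x. \<bar>Z2 x\<bar> powr r \<partial>M) + \<bar>e\<bar> powr r)"
    using intZ2r by (simp add: prob_space)
  also have "\<dots> \<le> 2 powr (r - 1) * ((\<integral>x. \<bar>Z2 x\<bar> powr r \<partial>M) + (\<integral>x. \<bar>Z2 x\<bar> powr r \<partial>M))"
  proof -
    have "q e \<le> (\<integral>x. q (Z2 x) \<partial>M)"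
      unfolding e_def by (rule jensens_inequality[OF intZ2 _ UNIVI _ qc]) (use intZ2r in \<open>auto simp: q_def\<close>)
    then show ?thesis unfolding q_def by (intro mult_left_mono) auto
  qed
  also have "\<dots> = 2 powr r * (\<integral>x. \<bar>Z2 x\<bar> powr r \<partial>M)"
  proof -
    have "(2::real) powr r = 2 powr (r - 1) * 2 powr 1" by (subst powr_add[symmetric]) simp
    then show ?thesis by simp
  qed
  finally show "(\<integral>x. \<bar>real_cond_exp M F Z2 x - (\<integral>y. Z2 y \<partial>M)\<bar> powr r \<partial>M) \<le> 2 powr r * (\<integral>x. \<bar>Z2 x\<bar> powr r \<partial>M)"
    unfolding e_def .
qed


lemma main_bound:
  fixes Z :: "'a \<Rightarrow> real"
  assumes P: "prob_space M" and sA: "subalgebra M A" and sB: "subalgebra M B"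
    and mix: "beta_mixing M A B \<beta>" and r: "1 \<le> r"
    and ZA[measurable]: "Z \<in> borel_measurable A" and intZ: "integrable M Z" and l: "0 < l"
    and intZ2r: "integrable M (\<lambda>x. \<bar>if \<bar>Z x - (\<integral>y. Z y \<partial>M)\<bar> \<le> l then 0 else Z x - (\<integral>y. Z y \<partial>M)\<bar> powr r)"
  shows "integrable M (\<lambda>x. \<bar>real_cond_exp M B Z x - (\<integral>y. Z y \<partial>M)\<bar> powr r)"
    and "(\<integral>x. \<bar>real_cond_exp M B Z x - (\<integral>y. Z y \<partial>M)\<bar> powr r \<partial>M)
      \<le> 2 powr (r - 1) * (2 powr (r + 1) * l powr r * \<beta>
          + 2 powr r * (\<integral>x. \<bar>if \<bar>Z x - (\<integral>y. Z y \<partial>M)\<bar> \<le> l then 0 else Z x - (\<integral>y. Z y \<partial>M)\<bar> powr r \<partial>M))"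
proof -
  interpret prob_space M by fact
  interpret B: sigma_finite_subalgebra M B using sfs[OF P sB] .
  define m where "m = (\<integral>y. Z y \<partial>M)"
  define Z1 where "Z1 = (\<lambda>x. if \<bar>Z x - m\<bar> \<le> l then Z x - m else 0)"
  define Z2 where "Z2 = (\<lambda>x. if \<bar>Z x - m\<bar> \<le> l then 0 else Z x - m)"
  have ZM[measurable]: "Z \<in> borel_measurable M" using measurable_from_subalg[OF sA ZA] .
  have Z1A[measurable]: "Z1 \<in> borel_measurable A" unfolding Z1_def by measurable
  have Z1M[measurable]: "Z1 \<in> borel_measurable M" unfolding Z1_def by measurable
  have Z2M[measurable]: "Z2 \<in> borel_measurable M" unfolding Z2_def by measurable
  have Z1b: "\<bar>Z1 x\<bar> \<le> l" for x unfolding Z1_def using l by auto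
  have intZ1: "integrable M Z1" by (rule intb[OF P Z1M Z1b])
  have Z2eq: "Z2 = (\<lambda>x. (Z x - m) - Z1 x)" unfolding Z1_def Z2_def by auto
  have intZ2: "integrable M Z2" unfolding Z2eq using intZ intZ1 by simp
  have intZ2r': "integrable M (\<lambda>x. \<bar>Z2 x\<bar> powr r)" using intZ2r unfolding Z2_def m_def .
  define W1 where "W1 = (\<lambda>x. real_cond_exp M B Z1 x - (\<integral>y. Z1 y \<partial>M))"
  define W2 where "W2 = (\<lambda>x. real_cond_exp M B Z2 x - (\<integral>y. Z2 y \<partial>M))"
  have W1M[measurable]: "W1 \<in> borel_measurable M" unfolding W1_def by measurable
  have W2M[measurable]: "W2 \<in> borel_measurable M" unfolding W2_def by measurable
  note b1 = bounded_case[OF P sA sB mix r Z1A Z1b l]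
  note b2 = tail_case[OF P sB r Z2M intZ2 intZ2r']
  have intW1: "integrable M (\<lambda>x. \<bar>W1 x\<bar> powr r)" using b1(1) unfolding W1_def .
  have intW2: "integrable M (\<lambda>x. \<bar>W2 x\<bar> powr r)" using b2(1) unfolding W2_def .
  have sum0: "(\<integral>y. Z1 y \<partial>M) + (\<integral>y. Z2 y \<partial>M) = 0"
  proof -
    have "(\<integral>y. Z1 y \<partial>M) + (\<integral>y. Z2 y \<partial>M) = (\<integral>y. Z1 y + Z2 y \<partial>M)"
      using intZ1 intZ2 by simp
    also have "(\<lambda>y. Z1 y + Z2 y) = (\<lambda>y. Z y - m)" unfolding Z1_def Z2_def by auto
    also have "(\<integral>y. Z y - m \<partial>M) = 0" using intZ by (simp add: m_def prob_space)
    finally show ?thesis .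
  qed
  have AEsplit: "AE x in M. real_cond_exp M B Z x - m = W1 x + W2 x"
  proof -
    have e1: "AE x in M. real_cond_exp M B (\<lambda>x. Z1 x + Z2 x) x = real_cond_exp M B Z1 x + real_cond_exp M B Z2 x"
      by (rule B.real_cond_exp_add[OF intZ1 intZ2])
    have sm: "(\<lambda>y. Z1 y + Z2 y) = (\<lambda>y. Z y - m)" unfolding Z1_def Z2_def by auto
    have e2: "AE x in M. real_cond_exp M B (\<lambda>x. Z x - m) x = real_cond_exp M B Z x - real_cond_exp M B (\<lambda>x. m) x"
      by (rule B.real_cond_exp_diff[OF intZ]) simp
    have e3: "AE x in M. real_cond_exp M B (\<lambda>x. m) x = m"
      by (rule B.real_cond_exp_F_meas[of "\<lambda>x. m"]) auto
    from e1[unfolded sm] e2 e3 show ?thesis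
      unfolding W1_def W2_def by eventually_elim (use sum0 in auto)
  qed
  have intbnd: "integrable M (\<lambda>x. 2 powr (r - 1) * (\<bar>W1 x\<bar> powr r + \<bar>W2 x\<bar> powr r))"
    using intW1 intW2 by simp
  have AEle: "AE x in M. \<bar>real_cond_exp M B Z x - m\<bar> powr r \<le> 2 powr (r - 1) * (\<bar>W1 x\<bar> powr r + \<bar>W2 x\<bar> powr r)"
    using AEsplit by eventually_elim (simp add: abs_add_powr_le[OF r])
  have intT: "integrable M (\<lambda>x. \<bar>real_cond_exp M B Z x - m\<bar> powr r)"
  proof (rule Bochner_Integration.integrable_bound[OF intbnd])
    show "(\<lambda>x. \<bar>real_cond_exp M B Z x - m\<bar> powr r) \<in> borel_measurable M" by measurable
    show "AE x in M. norm (\<bar>real_cond_exp M B Z x - m\<bar> powr r) \<le> norm (2 powr (r - 1) * (\<bar>W1 x\<bar> powr r + \<bar>W2 x\<bar> powr r))"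
      using AEle by eventually_elim auto
  qed
  then show "integrable M (\<lambda>x. \<bar>real_cond_exp M B Z x - (\<integral>y. Z y \<partial>M)\<bar> powr r)" unfolding m_def .
  have "(\<integral>x. \<bar>real_cond_exp M B Z x - m\<bar> powr r \<partial>M) \<le> (\<integral>x. 2 powr (r - 1) * (\<bar>W1 x\<bar> powr r + \<bar>W2 x\<bar> powr r) \<partial>M)"
    by (rule integral_mono_AE[OF intT intbnd AEle])
  also have "\<dots> = 2 powr (r - 1) * ((\<integral>x. \<bar>W1 x\<bar> powr r \<partial>M) + (\<integral>x. \<bar>W2 x\<bar> powr r \<partial>M))"
    using intW1 intW2 by simp
  also have "\<dots> \<le> 2 powr (r - 1) * (2 powr (r + 1) * l powr r * \<beta> + 2 powr r * (\<integral>x. \<bar>Z2 x\<bar> powr r \<partial>M))"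
    using b1(2) b2(2) unfolding W1_def W2_def by (intro mult_left_mono add_mono) auto
  finally show "(\<integral>x. \<bar>real_cond_exp M B Z x - (\<integral>y. Z y \<partial>M)\<bar> powr r \<partial>M)
      \<le> 2 powr (r - 1) * (2 powr (r + 1) * l powr r * \<beta>
          + 2 powr r * (\<integral>x. \<bar>if \<bar>Z x - (\<integral>y. Z y \<partial>M)\<bar> \<le> l then 0 else Z x - (\<integral>y. Z y \<partial>M)\<bar> powr r \<partial>M))"
    unfolding m_def Z2_def .
qed


lemma lim0:
  fixes x C r :: real
  assumes H: "\<And>l. 0 < l \<Longrightarrow> x \<le> C * l powr r" and r: "0 < r" and C: "0 \<le> C"
  shows "x \<le> 0"
proof (rule dense_ge)
  fix y :: real assume y: "0 < y"
  define l where "l = (y / (C + 1)) powr (1 / r)"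
  have l: "0 < l" unfolding l_def using y C by simp
  have "l powr r = y / (C + 1)" unfolding l_def using y C r by (simp add: powr_powr)
  then have "C * l powr r = y * (C / (C + 1))" by simp
  also have "\<dots> \<le> y * 1" using y C by (intro mult_left_mono) auto
  finally show "x \<le> y" using H[OF l] by simp
qed

lemma lp_r_bound:
  fixes f :: "'a \<Rightarrow> real"
  assumes r: "1 \<le> r" and int: "integrable M (\<lambda>x. \<bar>f x\<bar> powr r)"
    and le: "(\<integral>x. \<bar>f x\<bar> powr r \<partial>M) \<le> T powr r" and T: "0 \<le> T"
  shows "lp_norm M (ennreal r) f \<le> ennreal T"
proof -
  have I: "(\<integral>\<^sup>+ x. ennreal (\<bar>f x\<bar> powr r) \<partial>M) = ennreal (\<integral>x. \<bar>f x\<bar> powr r \<partial>M)"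
    by (rule nn_integral_eq_integral[OF int]) auto
  have "(\<integral>x. \<bar>f x\<bar> powr r \<partial>M) powr (1 / r) \<le> (T powr r) powr (1 / r)"
    using le r by (intro powr_mono2) auto
  also have "\<dots> = T" using r T by (simp add: powr_powr)
  finally show ?thesis
    unfolding lp_norm_def using r I by (simp add: Let_def ennreal_leI)
qed

lemma inf_case:
  fixes X :: "'a \<Rightarrow> real"
  assumes P: "prob_space M" and sA: "subalgebra M A" and sB: "subalgebra M B"
    and mix: "beta_mixing M A B \<beta>" and b0: "0 < \<beta>" and r: "1 \<le> r"
    and XM[measurable]: "X \<in> borel_measurable M"
    and fin: "esssup M (\<lambda>x. ennreal \<bar>X x - (\<integral>y. X y \<partial>M)\<bar>) \<noteq> \<infinity>"
  shows "\<exists>N\<ge>0. esssup M (\<lambda>x. ennreal \<bar>X x - (\<integral>y. X y \<partial>M)\<bar>) = ennreal N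
    \<and> integrable M (\<lambda>x. \<bar>real_cond_exp M B (real_cond_exp M A X) x - (\<integral>y. X y \<partial>M)\<bar> powr r)
    \<and> (\<integral>x. \<bar>real_cond_exp M B (real_cond_exp M A X) x - (\<integral>y. X y \<partial>M)\<bar> powr r \<partial>M)
        \<le> (10 * \<beta> powr (1 / r) * N) powr r"
proof -
  interpret prob_space M by fact
  interpret A: sigma_finite_subalgebra M A using sfs[OF P sA] .
  define c where "c = (\<integral>y. X y \<partial>M)"
  define E where "E = esssup M (\<lambda>x. ennreal \<bar>X x - c\<bar>)"
  define N where "N = enn2real E"
  have EN: "E = ennreal N" unfolding N_def using fin unfolding E_def c_def by (simp add: less_top)
  have N0: "0 \<le> N" unfolding N_def by simp
  have "AE x in M. ennreal \<bar>X x - c\<bar> \<le> E" unfolding E_def by (rule esssup_AE)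
  then have Yb: "AE x in M. \<bar>X x - c\<bar> \<le> N" unfolding EN using N0 by (auto elim: eventually_mono)
  have intX: "integrable M X"
    by (rule intbAE[OF P XM, where B="N + \<bar>c\<bar>"]) (use Yb in \<open>auto elim!: eventually_mono\<close>)
  define Z where "Z = real_cond_exp M A X"
  have ZA[measurable]: "Z \<in> borel_measurable A" unfolding Z_def by simp
  have intZ: "integrable M Z" and EZ: "(\<integral>y. Z y \<partial>M) = c"
    using A.real_cond_exp_int[OF intX] unfolding Z_def c_def by auto
  have intY: "integrable M (\<lambda>x. X x - c)" using intX by simp
  have CY: "AE x in M. real_cond_exp M A (\<lambda>x. X x - c) x = Z x - c"
  proof -
    have e2: "AE x in M. real_cond_exp M A (\<lambda>x. X x - c) x = real_cond_exp M A X x - real_cond_exp M A (\<lambda>x. c) x"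
      by (rule A.real_cond_exp_diff[OF intX]) simp
    have e3: "AE x in M. real_cond_exp M A (\<lambda>x. c) x = c"
      by (rule A.real_cond_exp_F_meas[of "\<lambda>x. c"]) auto
    from e2 e3 show ?thesis unfolding Z_def by eventually_elim auto
  qed
  have "AE x in M. real_cond_exp M A (\<lambda>x. X x - c) x \<le> N"
    by (rule A.real_cond_exp_le_c[OF intY]) (use Yb in \<open>auto elim!: eventually_mono\<close>)
  moreover have "AE x in M. real_cond_exp M A (\<lambda>x. X x - c) x \<ge> -N"
    by (rule A.real_cond_exp_ge_c[OF intY]) (use Yb in \<open>auto elim!: eventually_mono\<close>)
  ultimately have Zb: "AE x in M. \<bar>Z x - c\<bar> \<le> N"
    using CY by eventually_elim auto
  have bound: "integrable M (\<lambda>x. \<bar>real_cond_exp M B Z x - c\<bar> powr r)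
     \<and> (\<integral>x. \<bar>real_cond_exp M B Z x - c\<bar> powr r \<partial>M) \<le> 2 powr (r - 1) * 2 powr (r + 1) * \<beta> * l powr r"
    if l: "0 < l" "N \<le> l" for l
  proof -
    have Z2ae: "AE x in M. (if \<bar>Z x - (\<integral>y. Z y \<partial>M)\<bar> \<le> l then 0 else Z x - (\<integral>y. Z y \<partial>M)) = 0"
      using Zb l unfolding EZ by (auto elim!: eventually_mono)
    have ZM[measurable]: "Z \<in> borel_measurable M" using measurable_from_subalg[OF sA ZA] .
    have int0: "integrable M (\<lambda>x. \<bar>if \<bar>Z x - (\<integral>y. Z y \<partial>M)\<bar> \<le> l then 0 else Z x - (\<integral>y. Z y \<partial>M)\<bar> powr r)"
      by (rule integrable_cong_AE_imp[of M "\<lambda>x. 0"]) (use Z2ae in \<open>auto elim!: eventually_mono\<close>)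
    have i0: "(\<integral>x. \<bar>if \<bar>Z x - (\<integral>y. Z y \<partial>M)\<bar> \<le> l then 0 else Z x - (\<integral>y. Z y \<partial>M)\<bar> powr r \<partial>M) = 0"
      using integral_cong_AE[of "\<lambda>x. \<bar>if \<bar>Z x - (\<integral>y. Z y \<partial>M)\<bar> \<le> l then 0 else Z x - (\<integral>y. Z y \<partial>M)\<bar> powr r" M "\<lambda>x. 0"]
        Z2ae by (auto elim!: eventually_mono)
    note mb = main_bound[OF P sA sB mix r ZA intZ l(1) int0]
    have i0': "(\<integral>x. \<bar>if \<bar>Z x - c\<bar> \<le> l then 0 else Z x - c\<bar> powr r \<partial>M) = 0"
      using i0 unfolding EZ .
    show ?thesis using mb[unfolded EZ] i0' by (simp add: algebra_simps)
  qed
  have intW: "integrable M (\<lambda>x. \<bar>real_cond_exp M B Z x - c\<bar> powr r)"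
    using bound[of "N + 1"] N0 by auto
  have C0: "0 \<le> 2 powr (r - 1) * 2 powr (r + 1) * \<beta>" using b0 by simp
  have le: "(\<integral>x. \<bar>real_cond_exp M B Z x - c\<bar> powr r \<partial>M) \<le> (10 * \<beta> powr (1 / r) * N) powr r"
  proof (cases "N = 0")
    case True
    have "(\<integral>x. \<bar>real_cond_exp M B Z x - c\<bar> powr r \<partial>M) \<le> 0"
      by (rule lim0[OF _ _ C0, of _ r]) (use bound True r in auto)
    then show ?thesis using True by simp
  next
    case False
    then have Np: "0 < N" using N0 by simp
    have "(\<integral>x. \<bar>real_cond_exp M B Z x - c\<bar> powr r \<partial>M) \<le> 2 powr (r - 1) * 2 powr (r + 1) * \<beta> * N powr r"
      using bound[OF Np] by simp
    also have "2 powr (r - 1) * 2 powr (r + 1) = (4::real) powr r"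
    proof -
      have "2 powr (r - 1) * 2 powr (r + 1) = (2::real) powr ((r - 1) + (r + 1))" by (simp only: powr_add)
      also have "\<dots> = 2 powr r * 2 powr r" by (simp add: powr_add[symmetric])
      also have "\<dots> = (2 * 2) powr r" by (simp only: powr_mult)
      finally show ?thesis by simp
    qed
    also have "4 powr r * \<beta> * N powr r \<le> 10 powr r * \<beta> * N powr r"
      using r b0 by (intro mult_right_mono powr_mono2) auto
    also have "\<dots> = (10 * \<beta> powr (1 / r) * N) powr r"
      using r b0 N0 by (simp add: powr_mult powr_powr)
    finally show ?thesis .
  qed
  show ?thesis
    using N0 EN intW le unfolding E_def c_def Z_def by blast
qed

lemma alg:
  fixes r pp \<beta> N l Q :: real
  assumes r: "1 \<le> r" and rp: "r < pp" and b: "0 < \<beta>" and N: "0 < N"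
    and ldef: "l = N * \<beta> powr (- 1 / pp)" and Qdef: "Q = N powr pp"
  shows "2 powr (r - 1) * (2 powr (r + 1) * l powr r * \<beta> + 2 powr r * (l powr (r - pp) * Q))
     \<le> (10 * \<beta> powr (1 / r - 1 / pp) * N) powr r"
proof -
  have pp: "0 < pp" using r rp by simp
  define K where "K = N powr r * \<beta> powr (1 - r / pp)"
  have K0: "0 \<le> K" unfolding K_def by simp
  have e1: "l powr r * \<beta> = K"
  proof -
    have "l powr r = N powr r * \<beta> powr (- 1 / pp * r)"
      unfolding ldef by (simp only: powr_mult powr_powr)
    moreover have "\<beta> powr (- 1 / pp * r) * \<beta> = \<beta> powr (- 1 / pp * r) * \<beta> powr 1" using b by simp
    moreover have "\<beta> powr (- 1 / pp * r) * \<beta> powr 1 = \<beta> powr (- 1 / pp * r + 1)" by (simp only: powr_add)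
    moreover have "- 1 / pp * r + 1 = 1 - r / pp" by simp
    ultimately show ?thesis unfolding K_def by (metis mult.assoc)
  qed
  have e2: "l powr (r - pp) * Q = K"
  proof -
    have "l powr (r - pp) = N powr (r - pp) * \<beta> powr (- 1 / pp * (r - pp))"
      unfolding ldef by (simp only: powr_mult powr_powr)
    moreover have "- 1 / pp * (r - pp) = 1 - r / pp" using pp by (simp add: field_simps)
    moreover have "N powr (r - pp) * N powr pp = N powr r"
      by (simp only: powr_add[symmetric]) simp
    ultimately show ?thesis unfolding K_def Qdef by (metis mult.assoc mult.commute)
  qed
  have f1: "2 powr (r - 1) * 2 powr (r + 1) = (4::real) powr r"
  proof -
    have "2 powr (r - 1) * 2 powr (r + 1) = (2::real) powr ((r - 1) + (r + 1))" by (simp only: powr_add)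
    also have "(r - 1) + (r + 1) = r + r" by simp
    also have "(2::real) powr (r + r) = 2 powr r * 2 powr r" by (simp only: powr_add)
    also have "\<dots> = (2 * 2) powr r" by (simp only: powr_mult)
    finally show ?thesis by simp
  qed
  have f2: "2 powr (r - 1) * 2 powr r = (4::real) powr r / 2"
  proof -
    have "2 powr (r - 1) = (2::real) powr r / 2 powr 1" by (simp only: powr_diff)
    then have "2 powr (r - 1) * 2 powr r = (2::real) powr r * 2 powr r / 2" by simp
    also have "\<dots> = (2 * 2) powr r / 2" by (simp only: powr_mult)
    finally show ?thesis by simp
  qed
  have "2 powr (r - 1) * (2 powr (r + 1) * l powr r * \<beta> + 2 powr r * (l powr (r - pp) * Q))
      = (2 powr (r - 1) * 2 powr (r + 1)) * (l powr r * \<beta>) + (2 powr (r - 1) * 2 powr r) * (l powr (r - pp) * Q)"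
    by (simp only: distrib_left mult.assoc)
  also have "\<dots> = 4 powr r * (3 / 2) * K" unfolding e1 e2 f1 f2 by simp
  also have "\<dots> \<le> 4 powr r * (5 / 2) powr r * K"
  proof -
    have "(5/2::real) powr 1 \<le> (5 / 2) powr r" using r by (intro powr_mono) auto
    then have "3 / 2 \<le> (5/2::real) powr r" by simp
    then show ?thesis using K0 by (intro mult_right_mono mult_left_mono) auto
  qed
  also have "\<dots> = (10 * \<beta> powr (1 / r - 1 / pp) * N) powr r"
  proof -
    have "(10 * \<beta> powr (1 / r - 1 / pp) * N) powr r = 10 powr r * \<beta> powr ((1 / r - 1 / pp) * r) * N powr r"
      by (simp only: powr_mult powr_powr)
    moreover have "(1 / r - 1 / pp) * r = 1 - r / pp" using r by (simp add: field_simps)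
    moreover have "(10::real) powr r = 4 powr r * (5/2) powr r" by (simp add: powr_mult[symmetric])
    ultimately show ?thesis unfolding K_def by simp
  qed
  finally show ?thesis .
qed

lemma abs_le_1_powr:
  fixes y pp :: real
  assumes "1 \<le> pp"
  shows "\<bar>y\<bar> \<le> 1 + \<bar>y\<bar> powr pp"
proof (cases "\<bar>y\<bar> \<le> 1")
  case True then show ?thesis by (simp add: add_increasing2)
next
  case False
  then have "\<bar>y\<bar> powr 1 \<le> \<bar>y\<bar> powr pp" using assms by (intro powr_mono) auto
  then show ?thesis using False by simp
qed

lemma tail_pt:
  fixes t l r pp :: real
  assumes l: "0 < l" and rp: "r < pp"
  shows "\<bar>if \<bar>t\<bar> \<le> l then 0 else t\<bar> powr r \<le> l powr (r - pp) * \<bar>t\<bar> powr pp"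
proof (cases "\<bar>t\<bar> \<le> l")
  case True then show ?thesis by simp
next
  case False
  then have t: "l < \<bar>t\<bar>" by simp
  have "\<bar>t\<bar> powr r = \<bar>t\<bar> powr (r - pp) * \<bar>t\<bar> powr pp" by (simp only: powr_add[symmetric]) simp
  also have "\<dots> \<le> l powr (r - pp) * \<bar>t\<bar> powr pp"
    using t l rp by (intro mult_right_mono powr_mono2') auto
  finally show ?thesis using False by simp
qed

lemma fin_case:
  fixes X :: "'a \<Rightarrow> real" and pp :: real
  assumes P: "prob_space M" and sA: "subalgebra M A" and sB: "subalgebra M B"
    and mix: "beta_mixing M A B \<beta>" and b0: "0 < \<beta>" and r: "1 \<le> r" and rp: "r < pp"
    and XM[measurable]: "X \<in> borel_measurable M"
    and fin: "(\<integral>\<^sup>+ x. ennreal (\<bar>X x - (\<integral>y. X y \<partial>M)\<bar> powr pp) \<partial>M) \<noteq> \<infinity>"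
  shows "integrable M (\<lambda>x. \<bar>real_cond_exp M B (real_cond_exp M A X) x - (\<integral>y. X y \<partial>M)\<bar> powr r)
    \<and> (\<integral>x. \<bar>real_cond_exp M B (real_cond_exp M A X) x - (\<integral>y. X y \<partial>M)\<bar> powr r \<partial>M)
        \<le> (10 * \<beta> powr (1 / r - 1 / pp)
             * enn2real (\<integral>\<^sup>+ x. ennreal (\<bar>X x - (\<integral>y. X y \<partial>M)\<bar> powr pp) \<partial>M) powr (1 / pp)) powr r"
proof -
  interpret prob_space M by fact
  interpret A: sigma_finite_subalgebra M A using sfs[OF P sA] .
  have pp1: "1 \<le> pp" using r rp by simp
  define c where "c = (\<integral>y. X y \<partial>M)"
  define Y where "Y = (\<lambda>x. X x - c)"
  have YM[measurable]: "Y \<in> borel_measurable M" unfolding Y_def by measurable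
  have intYp: "integrable M (\<lambda>x. \<bar>Y x\<bar> powr pp)"
  proof (rule integrableI_bounded)
    show "(\<lambda>x. \<bar>Y x\<bar> powr pp) \<in> borel_measurable M" by measurable
    show "(\<integral>\<^sup>+ x. ennreal (norm (\<bar>Y x\<bar> powr pp)) \<partial>M) < \<infinity>"
      using fin unfolding Y_def c_def by (simp add: less_top)
  qed
  define Q where "Q = (\<integral>x. \<bar>Y x\<bar> powr pp \<partial>M)"
  have Q0: "0 \<le> Q" unfolding Q_def by simp
  have IQ: "enn2real (\<integral>\<^sup>+ x. ennreal (\<bar>X x - (\<integral>y. X y \<partial>M)\<bar> powr pp) \<partial>M) = Q"
  proof -
    have "(\<integral>\<^sup>+ x. ennreal (\<bar>Y x\<bar> powr pp) \<partial>M) = ennreal Q"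
      unfolding Q_def by (rule nn_integral_eq_integral[OF intYp]) auto
    then show ?thesis using Q0 unfolding Y_def c_def by simp
  qed
  have intY: "integrable M Y"
  proof (rule Bochner_Integration.integrable_bound)
    show "integrable M (\<lambda>x. 1 + \<bar>Y x\<bar> powr pp)" using intYp by simp
    show "AE x in M. norm (Y x) \<le> norm (1 + \<bar>Y x\<bar> powr pp)"
      using abs_le_1_powr[OF pp1] by (auto intro!: AE_I2 order.trans[OF _ abs_ge_self])
  qed simp
  have intX: "integrable M X"
  proof -
    have "integrable M (\<lambda>x. Y x + c)" using intY by simp
    then show ?thesis unfolding Y_def by simp
  qed
  define Z where "Z = real_cond_exp M A X"
  have ZA[measurable]: "Z \<in> borel_measurable A" unfolding Z_def by simp
  have ZM[measurable]: "Z \<in> borel_measurable M" using measurable_from_subalg[OF sA ZA] .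
  have intZ: "integrable M Z" and EZ: "(\<integral>y. Z y \<partial>M) = c"
    using A.real_cond_exp_int[OF intX] unfolding Z_def c_def by auto
  have CY: "AE x in M. real_cond_exp M A Y x = Z x - c"
  proof -
    have e2: "AE x in M. real_cond_exp M A (\<lambda>x. X x - c) x = real_cond_exp M A X x - real_cond_exp M A (\<lambda>x. c) x"
      by (rule A.real_cond_exp_diff[OF intX]) simp
    have e3: "AE x in M. real_cond_exp M A (\<lambda>x. c) x = c"
      by (rule A.real_cond_exp_F_meas[of "\<lambda>x. c"]) auto
    from e2 e3 show ?thesis unfolding Z_def Y_def by eventually_elim auto
  qed
  define q where "q = (\<lambda>t::real. \<bar>t\<bar> powr pp)"
  have qc: "convex_on UNIV q" unfolding q_def by (rule convex_abs_powr[OF pp1])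
  have qm[measurable]: "q \<in> borel_measurable borel" unfolding q_def by measurable
  have UNIVI: "(UNIV::real set) = {0<..<1} \<or> UNIV = {0<..} \<or> UNIV = {..<1} \<or> UNIV = (UNIV :: real set)"
    by simp
  have intqY: "integrable M (\<lambda>x. q (Y x))" using intYp unfolding q_def .
  have J: "AE x in M. q (real_cond_exp M A Y x) \<le> real_cond_exp M A (\<lambda>x. q (Y x)) x"
    using A.real_cond_exp_jensens_inequality(2)[OF intY _ UNIVI intqY qc qm] by simp
  have intqC: "integrable M (\<lambda>x. q (real_cond_exp M A Y x))"
    using A.integrable_convex_cond_exp[OF intY _ UNIVI intqY qc qm] by simp
  have AEq: "AE x in M. \<bar>Z x - c\<bar> powr pp = q (real_cond_exp M A Y x)"
    using CY unfolding q_def by auto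
  have intZc: "integrable M (\<lambda>x. \<bar>Z x - c\<bar> powr pp)"
    by (rule integrable_cong_AE_imp[OF intqC]) (use AEq in \<open>auto elim: eventually_mono\<close>)
  have ZcQ: "(\<integral>x. \<bar>Z x - c\<bar> powr pp \<partial>M) \<le> Q"
  proof -
    have "(\<integral>x. \<bar>Z x - c\<bar> powr pp \<partial>M) = (\<integral>x. q (real_cond_exp M A Y x) \<partial>M)"
      by (rule integral_cong_AE[OF _ _ AEq]) auto
    also have "\<dots> \<le> (\<integral>x. real_cond_exp M A (\<lambda>x. q (Y x)) x \<partial>M)"
      by (rule integral_mono_AE[OF intqC _ J]) (rule A.real_cond_exp_int(1)[OF intqY])
    also have "\<dots> = (\<integral>x. q (Y x) \<partial>M)" by (rule A.real_cond_exp_int(2)[OF intqY])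
    finally show ?thesis unfolding Q_def q_def .
  qed
  have bound: "integrable M (\<lambda>x. \<bar>real_cond_exp M B Z x - c\<bar> powr r)
     \<and> (\<integral>x. \<bar>real_cond_exp M B Z x - c\<bar> powr r \<partial>M)
         \<le> 2 powr (r - 1) * (2 powr (r + 1) * l powr r * \<beta> + 2 powr r * (l powr (r - pp) * Q))"
    if l: "0 < l" for l
  proof -
    define Z2 where "Z2 = (\<lambda>x. if \<bar>Z x - c\<bar> \<le> l then 0 else Z x - c)"
    have Z2M[measurable]: "Z2 \<in> borel_measurable M" unfolding Z2_def by measurable
    have pt: "\<bar>Z2 x\<bar> powr r \<le> l powr (r - pp) * \<bar>Z x - c\<bar> powr pp" for x
      unfolding Z2_def by (rule tail_pt[OF l rp])
    have intb2: "integrable M (\<lambda>x. l powr (r - pp) * \<bar>Z x - c\<bar> powr pp)" using intZc by simp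
    have int2: "integrable M (\<lambda>x. \<bar>Z2 x\<bar> powr r)"
    proof (rule Bochner_Integration.integrable_bound[OF intb2])
      show "AE x in M. norm (\<bar>Z2 x\<bar> powr r) \<le> norm (l powr (r - pp) * \<bar>Z x - c\<bar> powr pp)"
        using pt by (auto intro!: AE_I2)
    qed measurable
    have i2: "(\<integral>x. \<bar>Z2 x\<bar> powr r \<partial>M) \<le> l powr (r - pp) * Q"
    proof -
      have "(\<integral>x. \<bar>Z2 x\<bar> powr r \<partial>M) \<le> (\<integral>x. l powr (r - pp) * \<bar>Z x - c\<bar> powr pp \<partial>M)"
        by (rule integral_mono[OF int2 intb2 pt])
      also have "\<dots> = l powr (r - pp) * (\<integral>x. \<bar>Z x - c\<bar> powr pp \<partial>M)" by simp
      also have "\<dots> \<le> l powr (r - pp) * Q" using ZcQ by (intro mult_left_mono) auto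
      finally show ?thesis .
    qed
    have int2': "integrable M (\<lambda>x. \<bar>if \<bar>Z x - (\<integral>y. Z y \<partial>M)\<bar> \<le> l then 0 else Z x - (\<integral>y. Z y \<partial>M)\<bar> powr r)"
      using int2 unfolding Z2_def EZ .
    note mb = main_bound[OF P sA sB mix r ZA intZ l int2']
    have H: "2 powr (r - 1) * (2 powr (r + 1) * l powr r * \<beta> + 2 powr r * (\<integral>x. \<bar>Z2 x\<bar> powr r \<partial>M))
       \<le> 2 powr (r - 1) * (2 powr (r + 1) * l powr r * \<beta> + 2 powr r * (l powr (r - pp) * Q))"
      using i2 by (intro mult_left_mono add_left_mono) auto
    show ?thesis using mb(1)[unfolded EZ] order.trans[OF mb(2)[unfolded EZ] H[unfolded Z2_def]] by simp
  qed
  define N where "N = Q powr (1 / pp)"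
  have intW: "integrable M (\<lambda>x. \<bar>real_cond_exp M B Z x - c\<bar> powr r)"
    using bound[of 1] by simp
  have le: "(\<integral>x. \<bar>real_cond_exp M B Z x - c\<bar> powr r \<partial>M) \<le> (10 * \<beta> powr (1 / r - 1 / pp) * N) powr r"
  proof (cases "Q = 0")
    case True
    have C0: "0 \<le> 2 powr (r - 1) * 2 powr (r + 1) * \<beta>" using b0 by simp
    have "(\<integral>x. \<bar>real_cond_exp M B Z x - c\<bar> powr r \<partial>M) \<le> 0"
      by (rule lim0[OF _ _ C0, of _ r]) (use bound True r in \<open>auto simp: algebra_simps\<close>)
    then show ?thesis using True unfolding N_def by simp
  next
    case False
    then have Qp: "0 < Q" using Q0 by simp
    have Np: "0 < N" unfolding N_def using Qp by simp
    have QN: "Q = N powr pp" unfolding N_def using Qp pp1 by (simp add: powr_powr)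
    define l where "l = N * \<beta> powr (- 1 / pp)"
    have lp: "0 < l" unfolding l_def using Np b0 by simp
    show ?thesis
      using bound[OF lp] alg[OF r rp b0 Np l_def QN] by linarith
  qed
  show ?thesis
    using intW le unfolding IQ N_def Z_def c_def by blast
qed


theorem proposition2p7:
  fixes M A B :: "'a measure" and \<beta> r :: real and p :: ennreal and X :: "'a \<Rightarrow> real"
  assumes "prob_space M"
    and "0 < \<beta>" and "\<beta> \<le> 1"
    and "subalgebra M A" and "subalgebra M B"
    and "beta_mixing M A B \<beta>"
    and "1 \<le> r" and "ennreal r < p"
    and "X \<in> borel_measurable M" and "lp_norm M p X < \<infinity>"
  shows "lp_norm M (ennreal r)
           (\<lambda>x. real_cond_exp M B (real_cond_exp M A X) x - prob_space.expectation M X)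
         \<le> ennreal (10 * \<beta> powr (1 / r - recip_exp p))
           * lp_norm M p (\<lambda>x. X x - prob_space.expectation M X)"
proof -
  note P = assms(1) and b0 = assms(2) and sA = assms(4) and sB = assms(5) and mix = assms(6)
    and r = assms(7) and rp = assms(8) and XM = assms(9)
  interpret prob_space M by fact
  have pos: "0 < 10 * \<beta> powr (1 / r - recip_exp p)" using b0 by simp
  show ?thesis
  proof (cases "lp_norm M p (\<lambda>x. X x - expectation X) = \<infinity>")
    case True
    then show ?thesis using pos by (simp add: ennreal_mult_top)
  next
    case False
    show ?thesis
    proof (cases "p = \<infinity>")
      case True
      from False True have fin: "esssup M (\<lambda>x. ennreal \<bar>X x - expectation X\<bar>) \<noteq> \<infinity>"
        by (simp add: lp_norm_def)
      obtain N where N0: "0 \<le> N" and EN: "esssup M (\<lambda>x. ennreal \<bar>X x - expectation X\<bar>) = ennreal N"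
        and int: "integrable M (\<lambda>x. \<bar>real_cond_exp M B (real_cond_exp M A X) x - expectation X\<bar> powr r)"
        and le: "(\<integral>x. \<bar>real_cond_exp M B (real_cond_exp M A X) x - expectation X\<bar> powr r \<partial>M)
          \<le> (10 * \<beta> powr (1 / r) * N) powr r"
        using inf_case[OF P sA sB mix b0 r XM fin] by blast
      have "lp_norm M (ennreal r) (\<lambda>x. real_cond_exp M B (real_cond_exp M A X) x - expectation X)
          \<le> ennreal (10 * \<beta> powr (1 / r) * N)"
        by (rule lp_r_bound[OF r int le]) (use N0 in simp)
      also have "\<dots> = ennreal (10 * \<beta> powr (1 / r - recip_exp p)) * lp_norm M p (\<lambda>x. X x - expectation X)"
        using True EN N0 by (simp add: recip_exp_def lp_norm_def ennreal_mult)
      finally show ?thesis .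
    next
      case pfin: False
      define pp where "pp = enn2real p"
      have ppe: "p = ennreal pp" unfolding pp_def using pfin by (simp add: less_top)
      have rpp: "r < pp" using rp r unfolding ppe by (simp add: ennreal_less_iff)
      have pp0: "0 \<le> pp" using rpp r by simp
      have fin: "(\<integral>\<^sup>+ x. ennreal (\<bar>X x - expectation X\<bar> powr pp) \<partial>M) \<noteq> \<infinity>"
        using False pfin unfolding lp_norm_def pp_def by (auto simp: Let_def split: if_splits)
      note fc = fin_case[OF P sA sB mix b0 r rpp XM fin]
      define N where "N = enn2real (\<integral>\<^sup>+ x. ennreal (\<bar>X x - expectation X\<bar> powr pp) \<partial>M) powr (1 / pp)"
      have N0: "0 \<le> N" unfolding N_def by simp
      have "lp_norm M (ennreal r) (\<lambda>x. real_cond_exp M B (real_cond_exp M A X) x - expectation X)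
          \<le> ennreal (10 * \<beta> powr (1 / r - 1 / pp) * N)"
        by (rule lp_r_bound[OF r]) (use fc N0 b0 in \<open>simp_all add: N_def\<close>)
      also have "\<dots> = ennreal (10 * \<beta> powr (1 / r - recip_exp p)) * lp_norm M p (\<lambda>x. X x - expectation X)"
        using pfin fin N0 b0 unfolding N_def
        by (simp add: recip_exp_def lp_norm_def ennreal_mult pp_def Let_def)
      finally show ?thesis .
    qed
  qed
qed

end
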